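(* Let $0\le\alpha<\tfrac12$ and let $D$ be a distribution on $\{0,1\}^n$ given by a forest BN (every node has at most one parent) with all conditional probabilities in $(0,1)$ that is $\alpha$-difference bounded. Then every conjunction $f$ of $d$ literals satisfies $L_1(f)\le\left(\frac{2-2\alpha}{1-2\alpha}\right)^{2d}$.
   Context: For a BN with parent sets $\operatorname{pa}(v)$, let $\mu_{v,x_{\operatorname{pa}(v)}}=P(X_v=1\mid X_{\operatorname{pa}(v)}=x_{\operatorname{pa}(v)})$ and $\sigma_{v,x_{\operatorname{pa}(v)}}=\sqrt{\mu_{v,x_{\operatorname{pa}(v)}}(1-\mu_{v,x_{\operatorname{pa}(v)}})}$ (for roots, $\mu_v=P(X_v=1)$). The BN is $\alpha$-difference bounded if for every $v$ and every two assignments $x,y$ to $\operatorname{pa}(v)$, $|\mu_{v,x}-\mu_{v,y}|\le\alpha$ and $|\sigma_{v,x}-\sigma_{v,y}|\le\alpha$. The BN-induced basis is $\phi_v(x)=(x_v-\mu_{v,x_{\operatorname{pa}(v)}})/\sigma_{v,x_{\operatorname{pa}(v)}}$, $\phi_S=\prod_{v\in S}\phi_v$; $\hat f_S=\mathbb{E}_D[f(X)\phi_S(X)]$; $L_1(f)=\sum_{S\subseteq[n]}|\hat f_S|$. A conjunction of $d$ literals is $f(x)=\prod_{i\in T_1}x_i\prod_{j\in T_0}(1-x_j)$ with $T_0,T_1$ disjoint and $|T_0\cup T_1|=d$. *)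

theory Defs
  imports Complex_Main
begin

definition cube :: "nat \<Rightarrow> (nat \<Rightarrow> bool) set" where
  "cube n = {x. \<forall>i. n \<le> i \<longrightarrow> \<not> x i}"

definition ind :: "bool \<Rightarrow> real" where
  "ind b = (if b then 1 else 0)"

text \<open>Forest BN: each node v has at most one parent par v (None = root).
  cp v b = P(X_v = 1 | X_parent = b) for non-roots; for roots cp v False = P(X_v = 1).\<close>

definition bn_mu :: "(nat \<Rightarrow> nat option) \<Rightarrow> (nat \<Rightarrow> bool \<Rightarrow> real) \<Rightarrow> nat \<Rightarrow> (nat \<Rightarrow> bool) \<Rightarrow> real" where
  "bn_mu par cp v x = (case par v of None \<Rightarrow> cp v False | Some u \<Rightarrow> cp v (x u))"

definition bn_sigma :: "(nat \<Rightarrow> nat option) \<Rightarrow> (nat \<Rightarrow> bool \<Rightarrow> real) \<Rightarrow> nat \<Rightarrow> (nat \<Rightarrow> bool) \<Rightarrow> real" where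
  "bn_sigma par cp v x = sqrt (bn_mu par cp v x * (1 - bn_mu par cp v x))"

definition bn_dist :: "nat \<Rightarrow> (nat \<Rightarrow> nat option) \<Rightarrow> (nat \<Rightarrow> bool \<Rightarrow> real) \<Rightarrow> (nat \<Rightarrow> bool) \<Rightarrow> real" where
  "bn_dist n par cp x = (\<Prod>v<n. if x v then bn_mu par cp v x else 1 - bn_mu par cp v x)"

definition bn_phi :: "(nat \<Rightarrow> nat option) \<Rightarrow> (nat \<Rightarrow> bool \<Rightarrow> real) \<Rightarrow> nat \<Rightarrow> (nat \<Rightarrow> bool) \<Rightarrow> real" where
  "bn_phi par cp v x = (ind (x v) - bn_mu par cp v x) / bn_sigma par cp v x"

definition bn_phiS :: "(nat \<Rightarrow> nat option) \<Rightarrow> (nat \<Rightarrow> bool \<Rightarrow> real) \<Rightarrow> nat set \<Rightarrow> (nat \<Rightarrow> bool) \<Rightarrow> real" where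
  "bn_phiS par cp S x = (\<Prod>v\<in>S. bn_phi par cp v x)"

definition bn_coeff :: "nat \<Rightarrow> (nat \<Rightarrow> nat option) \<Rightarrow> (nat \<Rightarrow> bool \<Rightarrow> real) \<Rightarrow> ((nat \<Rightarrow> bool) \<Rightarrow> real) \<Rightarrow> nat set \<Rightarrow> real" where
  "bn_coeff n par cp f S = (\<Sum>x\<in>cube n. bn_dist n par cp x * f x * bn_phiS par cp S x)"

definition bn_L1 :: "nat \<Rightarrow> (nat \<Rightarrow> nat option) \<Rightarrow> (nat \<Rightarrow> bool \<Rightarrow> real) \<Rightarrow> ((nat \<Rightarrow> bool) \<Rightarrow> real) \<Rightarrow> real" where
  "bn_L1 n par cp f = (\<Sum>S\<in>Pow {..<n}. \<bar>bn_coeff n par cp f S\<bar>)"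

text \<open>Forest BN on n nodes: parents are nodes in range, and the parent relation is acyclic
  (witnessed by a rank function strictly increasing from parent to child).\<close>
definition forest_bn :: "nat \<Rightarrow> (nat \<Rightarrow> nat option) \<Rightarrow> bool" where
  "forest_bn n par \<longleftrightarrow> (\<forall>v<n. \<forall>u. par v = Some u \<longrightarrow> u < n) \<and>
     (\<exists>rank :: nat \<Rightarrow> nat. \<forall>v<n. \<forall>u. par v = Some u \<longrightarrow> rank u < rank v)"

definition diff_bounded :: "nat \<Rightarrow> (nat \<Rightarrow> nat option) \<Rightarrow> (nat \<Rightarrow> bool \<Rightarrow> real) \<Rightarrow> real \<Rightarrow> bool" where
  "diff_bounded n par cp \<alpha> \<longleftrightarrow> (\<forall>v<n. \<forall>x\<in>cube n. \<forall>y\<in>cube n.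
      \<bar>bn_mu par cp v x - bn_mu par cp v y\<bar> \<le> \<alpha> \<and>
      \<bar>bn_sigma par cp v x - bn_sigma par cp v y\<bar> \<le> \<alpha>)"

definition conjunction :: "nat set \<Rightarrow> nat set \<Rightarrow> (nat \<Rightarrow> bool) \<Rightarrow> real" where
  "conjunction T0 T1 x = (\<Prod>i\<in>T1. ind (x i)) * (\<Prod>j\<in>T0. 1 - ind (x j))"

end

theory Submission
  imports Defs
begin

definition cubeV :: "nat set \<Rightarrow> (nat \<Rightarrow> bool) set" where
  "cubeV V = {x. \<forall>i. i \<notin> V \<longrightarrow> \<not> x i}"

definition distV where
  "distV par cp V x = (\<Prod>v\<in>V. if x v then bn_mu par cp v x else 1 - bn_mu par cp v x)"

definition EV where
  "EV par cp V g = (\<Sum>x\<in>cubeV V. distV par cp V x * g x)"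

definition L1V where
  "L1V par cp V f = (\<Sum>S\<in>Pow V. \<bar>EV par cp V (\<lambda>x. f x * bn_phiS par cp S x)\<bar>)"

definition sig :: "real \<Rightarrow> real" where "sig c = sqrt (c * (1 - c))"

lemma bn_L1_eq: "bn_L1 n par cp f = L1V par cp {..<n} f"
  unfolding bn_L1_def L1V_def bn_coeff_def EV_def cube_def cubeV_def bn_dist_def distV_def
  by (simp add: mult.assoc not_less)

lemma finite_cubeV: "finite V \<Longrightarrow> finite (cubeV V)"
proof -
  assume f: "finite V"
  have "cubeV V \<subseteq> (\<lambda>A i. i \<in> A) ` Pow V"
  proof
    fix x assume "x \<in> cubeV V"
    then have "{i. x i} \<in> Pow V" "x = (\<lambda>i. i \<in> {i. x i})" unfolding cubeV_def by auto
    then show "x \<in> (\<lambda>A i. i \<in> A) ` Pow V" by blast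
  qed
  then show ?thesis using f by (meson finite_Pow_iff finite_imageI finite_subset)
qed

lemma sum_cubeV_insert:
  assumes "finite V" "w \<notin> V"
  shows "(\<Sum>x\<in>cubeV (insert w V). h x) = (\<Sum>x\<in>cubeV V. h x + h (x(w:=True)))"
proof -
  have eq: "cubeV (insert w V) = cubeV V \<union> (\<lambda>x. x(w:=True)) ` cubeV V"
  proof
    show "cubeV (insert w V) \<subseteq> cubeV V \<union> (\<lambda>x. x(w:=True)) ` cubeV V"
    proof
      fix x assume x: "x \<in> cubeV (insert w V)"
      show "x \<in> cubeV V \<union> (\<lambda>x. x(w:=True)) ` cubeV V"
      proof (cases "x w")
        case True
        then have "x = (x(w:=False))(w:=True)" by (auto simp: fun_eq_iff)
        moreover have "x(w:=False) \<in> cubeV V" using x unfolding cubeV_def by auto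
        ultimately show ?thesis by blast
      next
        case False
        then have "x \<in> cubeV V" using x unfolding cubeV_def by auto
        then show ?thesis by blast
      qed
    qed
    show "cubeV V \<union> (\<lambda>x. x(w:=True)) ` cubeV V \<subseteq> cubeV (insert w V)"
      unfolding cubeV_def by auto
  qed
  have disj: "cubeV V \<inter> (\<lambda>x. x(w:=True)) ` cubeV V = {}"
    using assms(2) unfolding cubeV_def by auto
  have inj: "inj_on (\<lambda>x. x(w:=True)) (cubeV V)"
  proof (rule inj_onI)
    fix x y assume a: "x \<in> cubeV V" "y \<in> cubeV V" "x(w:=True) = y(w:=True)"
    show "x = y"
    proof (rule ext)
      fix i show "x i = y i"
      proof (cases "i = w")
        case True then show ?thesis using a(1,2) assms(2) unfolding cubeV_def by auto
      next
        case False then show ?thesis using fun_cong[OF a(3), of i] by simp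
      qed
    qed
  qed
  have fin: "finite (cubeV V)" using finite_cubeV assms(1) .
  have "(\<Sum>x\<in>cubeV (insert w V). h x) = (\<Sum>x\<in>cubeV V. h x) + (\<Sum>x\<in>(\<lambda>x. x(w:=True)) ` cubeV V. h x)"
    unfolding eq by (rule sum.union_disjoint) (use fin disj in auto)
  also have "(\<Sum>x\<in>(\<lambda>x. x(w:=True)) ` cubeV V. h x) = (\<Sum>x\<in>cubeV V. h (x(w:=True)))"
    by (subst sum.reindex[OF inj]) simp
  finally show ?thesis by (simp add: sum.distrib)
qed

lemma sum_Pow_insert:
  assumes "finite V" "w \<notin> V"
  shows "(\<Sum>S\<in>Pow (insert w V). g S) = (\<Sum>S\<in>Pow V. g S + g (insert w S))"
proof -
  have inj: "inj_on (insert w) (Pow V)"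
    using assms(2) by (intro inj_onI) (metis PowD insert_ident subsetD)
  have "(\<Sum>S\<in>Pow (insert w V). g S) = (\<Sum>S\<in>Pow V. g S) + (\<Sum>S\<in>insert w ` Pow V. g S)"
    unfolding Pow_insert by (rule sum.union_disjoint) (use assms in auto)
  also have "(\<Sum>S\<in>insert w ` Pow V. g S) = (\<Sum>S\<in>Pow V. g (insert w S))"
    by (subst sum.reindex[OF inj]) simp
  finally show ?thesis by (simp add: sum.distrib)
qed

lemma mu_upd: "par v \<noteq> Some w \<Longrightarrow> bn_mu par cp v (x(w:=b)) = bn_mu par cp v x"
  by (cases "par v") (auto simp: bn_mu_def)

lemma sigma_upd: "par v \<noteq> Some w \<Longrightarrow> bn_sigma par cp v (x(w:=b)) = bn_sigma par cp v x"
  by (simp add: bn_sigma_def mu_upd)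

lemma phi_upd: "par v \<noteq> Some w \<Longrightarrow> v \<noteq> w \<Longrightarrow> bn_phi par cp v (x(w:=b)) = bn_phi par cp v x"
  by (simp add: bn_phi_def mu_upd sigma_upd)

lemma phiS_upd: "w \<notin> S \<Longrightarrow> \<forall>v\<in>S. par v \<noteq> Some w \<Longrightarrow> bn_phiS par cp S (x(w:=b)) = bn_phiS par cp S x"
  unfolding bn_phiS_def by (rule prod.cong[OF refl]) (metis phi_upd)

lemma distV_upd: "w \<notin> V \<Longrightarrow> \<forall>v\<in>V. par v \<noteq> Some w \<Longrightarrow> distV par cp V (x(w:=b)) = distV par cp V x"
  unfolding distV_def by (rule prod.cong) (auto simp: mu_upd)

lemma conj_upd: "w \<notin> T0 \<Longrightarrow> w \<notin> T1 \<Longrightarrow> conjunction T0 T1 (x(w:=b)) = conjunction T0 T1 x"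
proof -
  assume "w \<notin> T0" "w \<notin> T1"
  then have "(\<Prod>i\<in>T1. ind ((x(w:=b)) i)) = (\<Prod>i\<in>T1. ind (x i))"
    "(\<Prod>j\<in>T0. 1 - ind ((x(w:=b)) j)) = (\<Prod>j\<in>T0. 1 - ind (x j))"
    by (auto intro!: prod.cong)
  then show ?thesis unfolding conjunction_def by simp
qed


lemma EV_cong: "(\<And>x. f x = g x) \<Longrightarrow> EV par cp V f = EV par cp V g"
  by (simp add: EV_def)

lemma EV_linear:
  assumes "\<And>x. h x = a + b * ind (x p)"
  shows "EV par cp V (\<lambda>x. f x * g x * h x) = a * EV par cp V (\<lambda>x. f x * g x) + b * EV par cp V (\<lambda>x. (f x * ind (x p)) * g x)"
  unfolding EV_def assms by (simp add: sum_distrib_left sum.distrib[symmetric] algebra_simps)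

lemma L1V_nonneg: "0 \<le> L1V par cp V f"
  unfolding L1V_def by (simp add: sum_nonneg)

lemma coef_split:
  assumes fin: "finite V" and wV: "w \<notin> V" and leaf: "\<forall>v\<in>V. par v \<noteq> Some w"
    and nself: "par w \<noteq> Some w" and S: "S \<subseteq> V"
  shows "EV par cp (insert w V) (\<lambda>x. f x * bn_phiS par cp S x) =
      EV par cp V (\<lambda>x. bn_phiS par cp S x * ((1 - bn_mu par cp w x) * f (x(w:=False)) + bn_mu par cp w x * f (x(w:=True))))"
    and "EV par cp (insert w V) (\<lambda>x. f x * bn_phiS par cp (insert w S) x) =
      EV par cp V (\<lambda>x. bn_phiS par cp S x * ((1 - bn_mu par cp w x) * f (x(w:=False)) * ((0 - bn_mu par cp w x) / bn_sigma par cp w x)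
          + bn_mu par cp w x * f (x(w:=True)) * ((1 - bn_mu par cp w x) / bn_sigma par cp w x)))"
proof -
  have wS: "w \<notin> S" using S wV by blast
  have finS: "finite S" using S fin finite_subset by blast
  have leafS: "\<forall>v\<in>S. par v \<noteq> Some w" using S leaf by blast
  have xw: "x w = False" if "x \<in> cubeV V" for x using that wV unfolding cubeV_def by auto
  have xF: "x(w:=False) = x" if "x \<in> cubeV V" for x using xw[OF that] by (auto simp: fun_eq_iff)
  have d0: "distV par cp (insert w V) x = (1 - bn_mu par cp w x) * distV par cp V x" if "x \<in> cubeV V" for x
    using xw[OF that] fin wV unfolding distV_def by simp
  have dins: "distV par cp (insert w V) y = (if y w then bn_mu par cp w y else 1 - bn_mu par cp w y) * distV par cp V y" for y
    using fin wV unfolding distV_def by simp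
  have d1: "distV par cp (insert w V) (x(w:=True)) = bn_mu par cp w x * distV par cp V x" for x
    using dins[of "x(w:=True)"] distV_upd[OF wV leaf, of cp x True] mu_upd[of par w w, OF nself, of cp x True]
    by simp
  have p1: "bn_phiS par cp S (x(w:=True)) = bn_phiS par cp S x" for x
    using phiS_upd[OF wS leafS] .
  have pi: "bn_phiS par cp (insert w S) y = bn_phi par cp w y * bn_phiS par cp S y" for y
    using finS wS unfolding bn_phiS_def by simp
  have ph0: "bn_phi par cp w x = (0 - bn_mu par cp w x) / bn_sigma par cp w x" if "x \<in> cubeV V" for x
    using xw[OF that] unfolding bn_phi_def ind_def by simp
  have ph1: "bn_phi par cp w (x(w:=True)) = (1 - bn_mu par cp w x) / bn_sigma par cp w x" for x
    unfolding bn_phi_def ind_def by (simp add: mu_upd[of par w w, OF nself] sigma_upd[of par w w, OF nself])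
  show "EV par cp (insert w V) (\<lambda>x. f x * bn_phiS par cp S x) =
      EV par cp V (\<lambda>x. bn_phiS par cp S x * ((1 - bn_mu par cp w x) * f (x(w:=False)) + bn_mu par cp w x * f (x(w:=True))))"
    unfolding EV_def sum_cubeV_insert[OF fin wV]
    by (rule sum.cong[OF refl]) (simp add: d0 d1 p1 xF algebra_simps)
  show "EV par cp (insert w V) (\<lambda>x. f x * bn_phiS par cp (insert w S) x) =
      EV par cp V (\<lambda>x. bn_phiS par cp S x * ((1 - bn_mu par cp w x) * f (x(w:=False)) * ((0 - bn_mu par cp w x) / bn_sigma par cp w x)
          + bn_mu par cp w x * f (x(w:=True)) * ((1 - bn_mu par cp w x) / bn_sigma par cp w x)))"
    unfolding EV_def sum_cubeV_insert[OF fin wV]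
    by (rule sum.cong[OF refl]) (simp add: d0 d1 p1 pi ph0 ph1 xF algebra_simps)
qed


lemma finish:
  assumes fin: "finite V" and wV: "w \<notin> V"
    and c1: "\<forall>S\<in>Pow V. EV par cp (insert w V) (\<lambda>x. f x * bn_phiS par cp S x) =
        a1 * EV par cp V (\<lambda>x. f' x * bn_phiS par cp S x) + b1 * EV par cp V (\<lambda>x. (f' x * ind (x p)) * bn_phiS par cp S x)"
    and c2: "\<forall>S\<in>Pow V. EV par cp (insert w V) (\<lambda>x. f x * bn_phiS par cp (insert w S) x) =
        a2 * EV par cp V (\<lambda>x. f' x * bn_phiS par cp S x) + b2 * EV par cp V (\<lambda>x. (f' x * ind (x p)) * bn_phiS par cp S x)"
  shows "L1V par cp (insert w V) f \<le> (\<bar>a1\<bar> + \<bar>a2\<bar>) * L1V par cp V f' + (\<bar>b1\<bar> + \<bar>b2\<bar>) * L1V par cp V (\<lambda>x. f' x * ind (x p))"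
proof -
  let ?A = "\<lambda>S. EV par cp V (\<lambda>x. f' x * bn_phiS par cp S x)"
  let ?B = "\<lambda>S. EV par cp V (\<lambda>x. (f' x * ind (x p)) * bn_phiS par cp S x)"
  have "L1V par cp (insert w V) f = (\<Sum>S\<in>Pow V. \<bar>EV par cp (insert w V) (\<lambda>x. f x * bn_phiS par cp S x)\<bar>
      + \<bar>EV par cp (insert w V) (\<lambda>x. f x * bn_phiS par cp (insert w S) x)\<bar>)"
    unfolding L1V_def by (rule sum_Pow_insert[OF fin wV])
  also have "\<dots> \<le> (\<Sum>S\<in>Pow V. (\<bar>a1\<bar> + \<bar>a2\<bar>) * \<bar>?A S\<bar> + (\<bar>b1\<bar> + \<bar>b2\<bar>) * \<bar>?B S\<bar>)"
  proof (rule sum_mono)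
    fix S assume S: "S \<in> Pow V"
    have t1: "\<bar>a1 * ?A S + b1 * ?B S\<bar> \<le> \<bar>a1\<bar> * \<bar>?A S\<bar> + \<bar>b1\<bar> * \<bar>?B S\<bar>"
      using abs_triangle_ineq[of "a1 * ?A S" "b1 * ?B S"] by (simp add: abs_mult)
    have t2: "\<bar>a2 * ?A S + b2 * ?B S\<bar> \<le> \<bar>a2\<bar> * \<bar>?A S\<bar> + \<bar>b2\<bar> * \<bar>?B S\<bar>"
      using abs_triangle_ineq[of "a2 * ?A S" "b2 * ?B S"] by (simp add: abs_mult)
    show "\<bar>EV par cp (insert w V) (\<lambda>x. f x * bn_phiS par cp S x)\<bar>
      + \<bar>EV par cp (insert w V) (\<lambda>x. f x * bn_phiS par cp (insert w S) x)\<bar>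
      \<le> (\<bar>a1\<bar> + \<bar>a2\<bar>) * \<bar>?A S\<bar> + (\<bar>b1\<bar> + \<bar>b2\<bar>) * \<bar>?B S\<bar>"
    proof -
      have e1: "EV par cp (insert w V) (\<lambda>x. f x * bn_phiS par cp S x) = a1 * ?A S + b1 * ?B S" using c1 S by blast
      have e2: "EV par cp (insert w V) (\<lambda>x. f x * bn_phiS par cp (insert w S) x) = a2 * ?A S + b2 * ?B S" using c2 S by blast
      have "\<bar>a1 * ?A S + b1 * ?B S\<bar> + \<bar>a2 * ?A S + b2 * ?B S\<bar> \<le> (\<bar>a1\<bar> * \<bar>?A S\<bar> + \<bar>b1\<bar> * \<bar>?B S\<bar>) + (\<bar>a2\<bar> * \<bar>?A S\<bar> + \<bar>b2\<bar> * \<bar>?B S\<bar>)"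
        using t1 t2 by (rule add_mono)
      also have "\<dots> = (\<bar>a1\<bar> + \<bar>a2\<bar>) * \<bar>?A S\<bar> + (\<bar>b1\<bar> + \<bar>b2\<bar>) * \<bar>?B S\<bar>"
        by (simp only: distrib_right add_ac)
      finally show ?thesis unfolding e1 e2 .
    qed
  qed
  also have "\<dots> = (\<bar>a1\<bar> + \<bar>a2\<bar>) * L1V par cp V f' + (\<bar>b1\<bar> + \<bar>b2\<bar>) * L1V par cp V (\<lambda>x. f' x * ind (x p))"
    unfolding L1V_def by (simp add: sum.distrib sum_distrib_left)
  finally show ?thesis .
qed

lemma conj_ind_T1: "w \<in> T1 \<Longrightarrow> finite T1 \<Longrightarrow> conjunction T0 T1 x = ind (x w) * conjunction T0 (T1 - {w}) x"
  unfolding conjunction_def by (simp add: prod.remove mult.assoc)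

lemma conj_ind_T0: "w \<in> T0 \<Longrightarrow> finite T0 \<Longrightarrow> conjunction T0 T1 x = (1 - ind (x w)) * conjunction (T0 - {w}) T1 x"
  unfolding conjunction_def by (simp add: prod.remove mult_ac)

lemma conj_mult_ind: "p \<notin> T0 \<Longrightarrow> finite T1 \<Longrightarrow> conjunction T0 T1 x * ind (x p) = conjunction T0 (insert p T1) x"
proof (cases "p \<in> T1")
  case True
  assume "finite T1"
  then show ?thesis using True conj_ind_T1[OF True]
    by (simp add: insert_absorb ind_def)
next
  case False
  assume "finite T1"
  then show ?thesis using False unfolding conjunction_def by (simp add: mult_ac)
qed

lemma conj_mult_ind0: "p \<in> T0 \<Longrightarrow> finite T0 \<Longrightarrow> conjunction T0 T1 x * ind (x p) = 0"
  using conj_ind_T0[of p T0 T1 x] by (simp add: ind_def)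

lemma I2_help:
  fixes K :: real
  assumes IH: "\<forall>T0 T1. T0 \<subseteq> V \<longrightarrow> T1 \<subseteq> V \<longrightarrow> T0 \<inter> T1 = {} \<longrightarrow> L1V par cp V (conjunction T0 T1) \<le> K ^ card (T0 \<union> T1)"
    and fin: "finite V" and p: "p \<in> V" and T: "T0 \<subseteq> V" "T1 \<subseteq> V" "T0 \<inter> T1 = {}"
    and d: "card (T0 \<union> T1) + 1 \<le> d" and K: "1 \<le> K"
  shows "L1V par cp V (\<lambda>x. conjunction T0 T1 x * ind (x p)) \<le> K ^ d"
proof (cases "p \<in> T0")
  case True
  have z: "\<And>x. conjunction T0 T1 x * ind (x p) = 0"
    using conj_mult_ind0[OF True] T fin finite_subset by blast
  have "L1V par cp V (\<lambda>x. conjunction T0 T1 x * ind (x p)) = 0"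
    unfolding L1V_def EV_def by (simp add: z)
  then show ?thesis using K by simp
next
  case False
  have finT1: "finite T1" using T fin finite_subset by blast
  have eq: "(\<lambda>x. conjunction T0 T1 x * ind (x p)) = conjunction T0 (insert p T1)"
    using conj_mult_ind[OF False finT1] by blast
  have s1: "insert p T1 \<subseteq> V" "T0 \<inter> insert p T1 = {}" using T p False by auto
  have "L1V par cp V (conjunction T0 (insert p T1)) \<le> K ^ card (T0 \<union> insert p T1)"
    using IH T(1) s1 by blast
  also have "\<dots> \<le> K ^ d"
  proof (rule power_increasing[OF _ K])
    have finU: "finite (T0 \<union> T1)" using T fin finite_subset by (meson finite_UnI)
    have "T0 \<union> insert p T1 = insert p (T0 \<union> T1)" by blast
    then have "card (T0 \<union> insert p T1) \<le> card (T0 \<union> T1) + 1"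
      using finU by (simp add: card_insert_if)
    then show "card (T0 \<union> insert p T1) \<le> d" using d by linarith
  qed
  finally show ?thesis using eq by simp
qed

lemma arith_fin:
  fixes K L L1 L2 A B \<alpha> :: real
  assumes "L \<le> A * L1 + B * L2" "0 \<le> A" "A \<le> 2" "0 \<le> B" "B \<le> 2 * \<alpha>"
    "0 \<le> L1" "L1 \<le> K ^ (d - 1)" "0 \<le> L2" "B = 0 \<or> L2 \<le> K ^ d"
    "2 + 2 * \<alpha> * K = K" "1 \<le> d" "1 \<le> K" "0 \<le> \<alpha>"
  shows "L \<le> K ^ d"
proof -
  have Kd: "K ^ d = K * K ^ (d - 1)" using assms(11) by (cases d) simp_all
  have h1: "A * L1 \<le> 2 * K ^ (d - 1)"
  proof -
    have "A * L1 \<le> 2 * L1" using assms(3,6) by (rule mult_right_mono)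
    also have "\<dots> \<le> 2 * K ^ (d - 1)" using assms(7) by simp
    finally show ?thesis .
  qed
  have h2: "B * L2 \<le> 2 * \<alpha> * K ^ d"
  proof (cases "B = 0")
    case True then show ?thesis using assms(12,13) by simp
  next
    case False then have L2: "L2 \<le> K ^ d" using assms(9) by blast
    have "B * L2 \<le> (2 * \<alpha>) * L2" using assms(5,8) by (rule mult_right_mono)
    also have "\<dots> \<le> (2 * \<alpha>) * K ^ d" using L2 assms(13) by (intro mult_left_mono) simp_all
    finally show ?thesis .
  qed
  have "2 * K ^ (d - 1) + 2 * \<alpha> * K ^ d = (2 + 2 * \<alpha> * K) * K ^ (d - 1)" using Kd by (simp add: algebra_simps)
  also have "\<dots> = K ^ d" using assms(10) Kd by simp
  finally show ?thesis using assms(1) h1 h2 by linarith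
qed


definition goodnode :: "(nat \<Rightarrow> nat option) \<Rightarrow> (nat \<Rightarrow> bool \<Rightarrow> real) \<Rightarrow> real \<Rightarrow> nat \<Rightarrow> bool" where
  "goodnode par cp \<alpha> v \<longleftrightarrow> (par v = None \<longrightarrow> 0 < cp v False \<and> cp v False < 1) \<and>
     (\<forall>u. par v = Some u \<longrightarrow> (\<forall>b. 0 < cp v b \<and> cp v b < 1) \<and> \<bar>cp v True - cp v False\<bar> \<le> \<alpha>
        \<and> \<bar>sig (cp v True) - sig (cp v False)\<bar> \<le> \<alpha>)"

lemma sig_bounds: "0 < c \<Longrightarrow> c < 1 \<Longrightarrow> 0 \<le> sig c \<and> sig c \<le> 1"
proof -
  assume c: "0 < c" "c < 1"
  have "c * (1 - c) \<le> 1 * 1" using c by (intro mult_mono) auto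
  moreover have "0 \<le> c * (1 - c)" using c by simp
  ultimately show ?thesis unfolding sig_def by simp
qed

lemma mu_bounds: "goodnode par cp \<alpha> w \<Longrightarrow> 0 < bn_mu par cp w x \<and> bn_mu par cp w x < 1"
  unfolding goodnode_def bn_mu_def by (cases "par w") auto

lemma mu_sigma: "goodnode par cp \<alpha> w \<Longrightarrow> bn_mu par cp w x * ((1 - bn_mu par cp w x) / bn_sigma par cp w x) = bn_sigma par cp w x"
proof -
  assume g: "goodnode par cp \<alpha> w"
  have "0 \<le> bn_mu par cp w x * (1 - bn_mu par cp w x)" using mu_bounds[OF g, of x] by simp
  then show ?thesis unfolding bn_sigma_def by (simp add: times_divide_eq_right real_div_sqrt)
qed

lemma node_affine:
  assumes g: "goodnode par cp \<alpha> w" and pin: "\<forall>u. par w = Some u \<longrightarrow> u \<in> V" and a0: "0 \<le> \<alpha>"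
  obtains p a1 b1 a2 b2 where "\<forall>x. bn_mu par cp w x = a1 + b1 * ind (x p)"
    "\<forall>x. bn_sigma par cp w x = a2 + b2 * ind (x p)" "b1 = 0 \<and> b2 = 0 \<or> p \<in> V"
    "\<bar>b1\<bar> \<le> \<alpha>" "\<bar>b2\<bar> \<le> \<alpha>" "0 < a1" "a1 < 1" "0 \<le> a2" "a2 \<le> 1"
proof (cases "par w")
  case None
  have c: "0 < cp w False" "cp w False < 1" using g None unfolding goodnode_def by auto
  show ?thesis
  proof (rule that[of "cp w False" 0 w "sig (cp w False)" 0])
    show "\<forall>x. bn_mu par cp w x = cp w False + 0 * ind (x w)" using None by (simp add: bn_mu_def)
    show "\<forall>x. bn_sigma par cp w x = sig (cp w False) + 0 * ind (x w)" using None by (simp add: bn_sigma_def bn_mu_def sig_def)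
  qed (use c a0 sig_bounds[OF c] in auto)
next
  case (Some p)
  have c: "\<forall>b. 0 < cp w b \<and> cp w b < 1" "\<bar>cp w True - cp w False\<bar> \<le> \<alpha>"
     "\<bar>sig (cp w True) - sig (cp w False)\<bar> \<le> \<alpha>" using g Some unfolding goodnode_def by auto
  have cF: "0 < cp w False" "cp w False < 1" using c(1) by auto
  show ?thesis
  proof (rule that[of "cp w False" "cp w True - cp w False" p "sig (cp w False)" "sig (cp w True) - sig (cp w False)"])
    show "\<forall>x. bn_mu par cp w x = cp w False + (cp w True - cp w False) * ind (x p)"
      using Some by (auto simp: bn_mu_def ind_def)
    show "\<forall>x. bn_sigma par cp w x = sig (cp w False) + (sig (cp w True) - sig (cp w False)) * ind (x p)"
      using Some by (auto simp: bn_sigma_def bn_mu_def sig_def ind_def)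
    show "b1 = 0 \<and> b2 = 0 \<or> p \<in> V" for b1 b2 :: real using pin Some by auto
  qed (use c cF sig_bounds[OF cF] in auto)
qed


lemma step_combine:
  fixes K \<alpha> :: real
  assumes fin: "finite V" and wV: "w \<notin> V"
    and c1: "\<forall>S\<in>Pow V. EV par cp (insert w V) (\<lambda>x. f x * bn_phiS par cp S x) =
        a1 * EV par cp V (\<lambda>x. conjunction T0 T1 x * bn_phiS par cp S x) + b1 * EV par cp V (\<lambda>x. (conjunction T0 T1 x * ind (x p)) * bn_phiS par cp S x)"
    and c2: "\<forall>S\<in>Pow V. EV par cp (insert w V) (\<lambda>x. f x * bn_phiS par cp (insert w S) x) =
        a2 * EV par cp V (\<lambda>x. conjunction T0 T1 x * bn_phiS par cp S x) + b2 * EV par cp V (\<lambda>x. (conjunction T0 T1 x * ind (x p)) * bn_phiS par cp S x)"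
    and ab: "\<bar>a1\<bar> + \<bar>a2\<bar> \<le> 2" "\<bar>b1\<bar> + \<bar>b2\<bar> \<le> 2 * \<alpha>" and pV: "b1 = 0 \<and> b2 = 0 \<or> p \<in> V"
    and IH: "\<forall>T0 T1. T0 \<subseteq> V \<longrightarrow> T1 \<subseteq> V \<longrightarrow> T0 \<inter> T1 = {} \<longrightarrow> L1V par cp V (conjunction T0 T1) \<le> K ^ card (T0 \<union> T1)"
    and T: "T0 \<subseteq> V" "T1 \<subseteq> V" "T0 \<inter> T1 = {}" and d: "card (T0 \<union> T1) + 1 = d"
    and Kid: "2 + 2 * \<alpha> * K = K" and K1: "1 \<le> K" and a0: "0 \<le> \<alpha>"
  shows "L1V par cp (insert w V) f \<le> K ^ d"
proof -
  have F: "L1V par cp (insert w V) f \<le> (\<bar>a1\<bar> + \<bar>a2\<bar>) * L1V par cp V (conjunction T0 T1)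
      + (\<bar>b1\<bar> + \<bar>b2\<bar>) * L1V par cp V (\<lambda>x. conjunction T0 T1 x * ind (x p))"
    by (rule finish[OF fin wV c1 c2])
  have dd: "d - 1 = card (T0 \<union> T1)" "1 \<le> d" "card (T0 \<union> T1) + 1 \<le> d" using d by simp_all
  have I1: "L1V par cp V (conjunction T0 T1) \<le> K ^ (d - 1)" unfolding dd(1) using IH T by blast
  have I2: "\<bar>b1\<bar> + \<bar>b2\<bar> = 0 \<or> L1V par cp V (\<lambda>x. conjunction T0 T1 x * ind (x p)) \<le> K ^ d"
  proof (cases "b1 = 0 \<and> b2 = 0")
    case True then show ?thesis by simp
  next
    case False
    then have "p \<in> V" using pV by blast
    then show ?thesis using I2_help[OF IH fin _ T(1) T(2) T(3) dd(3) K1] by simp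
  qed
  show ?thesis
    by (rule arith_fin[OF F _ ab(1) _ ab(2) L1V_nonneg I1 L1V_nonneg I2 Kid dd(2) K1 a0]) simp_all
qed

lemma main:
  fixes \<alpha> :: real and rank :: "nat \<Rightarrow> nat" and par :: "nat \<Rightarrow> nat option" and cp :: "nat \<Rightarrow> bool \<Rightarrow> real"
  assumes a0: "0 \<le> \<alpha>" and a1: "\<alpha> < 1/2" and finV: "finite V"
  shows "(\<forall>v\<in>V. \<forall>u. par v = Some u \<longrightarrow> u \<in> V \<and> rank u < rank v) \<longrightarrow> (\<forall>v\<in>V. goodnode par cp \<alpha> v) \<longrightarrow>
     (\<forall>T0 T1. T0 \<subseteq> V \<longrightarrow> T1 \<subseteq> V \<longrightarrow> T0 \<inter> T1 = {} \<longrightarrow>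
        L1V par cp V (conjunction T0 T1) \<le> (2/(1-2*\<alpha>)) ^ card (T0 \<union> T1))"
  using finV
proof (induction V rule: finite_ranking_induct[where f = rank])
  case empty
  have c: "cubeV {} = {\<lambda>_. False}" by (auto simp: cubeV_def fun_eq_iff)
  show ?case
  proof (intro impI allI)
    fix T0 T1 :: "nat set" assume "T0 \<subseteq> {}" "T1 \<subseteq> {}"
    then have e: "T0 = {}" "T1 = {}" by auto
    have "L1V par cp {} (conjunction {} {}) = 1"
      unfolding L1V_def EV_def c distV_def bn_phiS_def conjunction_def by simp
    then show "L1V par cp {} (conjunction T0 T1) \<le> (2/(1-2*\<alpha>)) ^ card (T0 \<union> T1)"
      unfolding e by simp
  qed
next
  case (insert w V)
  show ?case
  proof (cases "w \<in> V")
    case True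
    then have e: "insert w V = V" by (rule insert_absorb)
    show ?thesis unfolding e by (rule insert.IH)
  next
    case wV: False
    show ?thesis
    proof (intro impI allI)
      fix T0 T1 :: "nat set"
      assume cl: "\<forall>v\<in>insert w V. \<forall>u. par v = Some u \<longrightarrow> u \<in> insert w V \<and> rank u < rank v"
        and gd: "\<forall>v\<in>insert w V. goodnode par cp \<alpha> v"
        and T0: "T0 \<subseteq> insert w V" and T1: "T1 \<subseteq> insert w V" and dj: "T0 \<inter> T1 = {}"
      define K where "K = 2/(1-2*\<alpha>)"
      have Kpos: "1 - 2*\<alpha> > 0" using a1 by simp
      have Kid: "2 + 2*\<alpha>*K = K" unfolding K_def using Kpos by (simp add: field_simps)
      have K1: "1 \<le> K" unfolding K_def using Kpos a0 by (simp add: field_simps)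
      have leaf: "\<forall>v\<in>V. par v \<noteq> Some w"
      proof (intro ballI notI)
        fix v assume v: "v \<in> V" "par v = Some w"
        then have "rank w < rank v" using cl by blast
        moreover have "rank v \<le> rank w" using insert.hyps(2) v(1) .
        ultimately show False by simp
      qed
      have nself: "par w \<noteq> Some w" using cl by blast
      have clV: "\<forall>v\<in>V. \<forall>u. par v = Some u \<longrightarrow> u \<in> V \<and> rank u < rank v"
      proof (intro ballI allI impI)
        fix v u assume v: "v \<in> V" "par v = Some u"
        then have "u \<in> insert w V \<and> rank u < rank v" using cl by blast
        moreover have "u \<noteq> w" using leaf v by blast
        ultimately show "u \<in> V \<and> rank u < rank v" by blast
      qed
      have IH: "\<forall>T0 T1. T0 \<subseteq> V \<longrightarrow> T1 \<subseteq> V \<longrightarrow> T0 \<inter> T1 = {} \<longrightarrow> L1V par cp V (conjunction T0 T1) \<le> K ^ card (T0 \<union> T1)"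
      proof -
        have gdV: "\<forall>v\<in>V. goodnode par cp \<alpha> v" using gd by blast
        show ?thesis using mp[OF mp[OF insert.IH clV] gdV] by (simp only: K_def)
      qed
      have gw: "goodnode par cp \<alpha> w" using gd by blast
      have pin: "\<forall>u. par w = Some u \<longrightarrow> u \<in> V"
      proof (intro allI impI)
        fix u assume u: "par w = Some u"
        then have "u \<in> insert w V" using cl by blast
        moreover have "u \<noteq> w" using u nself by blast
        ultimately show "u \<in> V" by blast
      qed
      obtain p a1 b1 a2 b2 where hmu: "\<forall>x. bn_mu par cp w x = a1 + b1 * ind (x p)"
        and hsig: "\<forall>x. bn_sigma par cp w x = a2 + b2 * ind (x p)" and pV: "b1 = 0 \<and> b2 = 0 \<or> p \<in> V"
        and hb: "\<bar>b1\<bar> \<le> \<alpha>" "\<bar>b2\<bar> \<le> \<alpha>" "0 < a1" "a1 < 1" "0 \<le> a2" "a2 \<le> 1"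
        by (rule node_affine[OF gw pin a0])
      have finV: "finite V" using insert.hyps(1) .
      have finT: "finite T0" "finite T1" using finite_subset[OF T0] finite_subset[OF T1] finV by auto
      note cs1 = coef_split(1)[OF finV wV leaf nself]
      note cs2 = coef_split(2)[OF finV wV leaf nself]
      have ms: "\<And>x c. bn_mu par cp w x * c * ((1 - bn_mu par cp w x) / bn_sigma par cp w x) = c * bn_sigma par cp w x"
      proof -
        fix x c
        have "bn_mu par cp w x * c * ((1 - bn_mu par cp w x) / bn_sigma par cp w x)
            = c * (bn_mu par cp w x * ((1 - bn_mu par cp w x) / bn_sigma par cp w x))" by (simp only: mult_ac)
        also have "\<dots> = c * bn_sigma par cp w x" by (simp only: mu_sigma[OF gw, of x])
        finally show "bn_mu par cp w x * c * ((1 - bn_mu par cp w x) / bn_sigma par cp w x) = c * bn_sigma par cp w x" .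
      qed
      have alg: "\<And>m c s :: real. (1 - m) * c * ((0 - m) / s) = - (m * c * ((1 - m) / s))"
        by (cases "s = 0") (simp_all add: field_simps)
      have ms2: "\<And>x c. (1 - bn_mu par cp w x) * c * ((0 - bn_mu par cp w x) / bn_sigma par cp w x) = c * (- bn_sigma par cp w x)"
      proof -
        fix x c
        show "(1 - bn_mu par cp w x) * c * ((0 - bn_mu par cp w x) / bn_sigma par cp w x) = c * (- bn_sigma par cp w x)"
          unfolding alg ms by simp
      qed
      consider (out) "w \<notin> T0" "w \<notin> T1" | (one) "w \<in> T1" | (zero) "w \<in> T0" by blast
      then show "L1V par cp (insert w V) (conjunction T0 T1) \<le> (2/(1-2*\<alpha>)) ^ card (T0 \<union> T1)"
      proof cases
        case out
        have TV: "T0 \<subseteq> V" "T1 \<subseteq> V" using out T0 T1 by auto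
        have fx: "\<And>x b. conjunction T0 T1 (x(w:=b)) = conjunction T0 T1 x"
          using conj_upd[OF out] .
        have "L1V par cp (insert w V) (conjunction T0 T1) = L1V par cp V (conjunction T0 T1)"
        proof -
          have "L1V par cp (insert w V) (conjunction T0 T1) = (\<Sum>S\<in>Pow V.
              \<bar>EV par cp (insert w V) (\<lambda>x. conjunction T0 T1 x * bn_phiS par cp S x)\<bar>
            + \<bar>EV par cp (insert w V) (\<lambda>x. conjunction T0 T1 x * bn_phiS par cp (insert w S) x)\<bar>)"
            unfolding L1V_def by (rule sum_Pow_insert[OF finV wV])
          also have "\<dots> = L1V par cp V (conjunction T0 T1)" unfolding L1V_def
          proof (rule sum.cong[OF refl])
            fix S assume "S \<in> Pow V" then have S: "S \<subseteq> V" by blast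
            have e1: "EV par cp (insert w V) (\<lambda>x. conjunction T0 T1 x * bn_phiS par cp S x)
                = EV par cp V (\<lambda>x. conjunction T0 T1 x * bn_phiS par cp S x)"
              unfolding cs1[OF S] by (rule EV_cong) (simp add: fx algebra_simps)
            have e2: "EV par cp (insert w V) (\<lambda>x. conjunction T0 T1 x * bn_phiS par cp (insert w S) x) = 0"
              unfolding cs2[OF S] fx ms ms2 by (simp add: EV_def)
            show "\<bar>EV par cp (insert w V) (\<lambda>x. conjunction T0 T1 x * bn_phiS par cp S x)\<bar>
            + \<bar>EV par cp (insert w V) (\<lambda>x. conjunction T0 T1 x * bn_phiS par cp (insert w S) x)\<bar>
              = \<bar>EV par cp V (\<lambda>x. conjunction T0 T1 x * bn_phiS par cp S x)\<bar>"
              using e1 e2 by simp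
          qed
          finally show ?thesis .
        qed
        then show ?thesis using IH TV dj unfolding K_def by auto
      next
        case one
        have w0: "w \<notin> T0" using one dj by blast
        define T1' where "T1' = T1 - {w}"
        have T': "T0 \<subseteq> V" "T1' \<subseteq> V" "T0 \<inter> T1' = {}" using T0 T1 w0 dj unfolding T1'_def by auto
        have wT': "w \<notin> T1'" by (simp add: T1'_def)
        have fx: "\<And>x b. conjunction T0 T1 (x(w:=b)) = ind b * conjunction T0 T1' x"
          using conj_ind_T1[OF one finT(2)] conj_upd[OF w0 wT'] unfolding T1'_def by simp
        have d: "card (T0 \<union> T1') + 1 = card (T0 \<union> T1)"
        proof -
          have "T0 \<union> T1' = (T0 \<union> T1) - {w}" unfolding T1'_def using w0 by blast
          moreover have wU: "w \<in> T0 \<union> T1" using one by blast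
          moreover have "card (T0 \<union> T1) > 0" using \<open>w \<in> T0 \<union> T1\<close> finT by (auto simp: card_gt_0_iff)
          ultimately show ?thesis using finT by (simp add: card_Diff_singleton)
        qed
        have c1: "\<forall>S\<in>Pow V. EV par cp (insert w V) (\<lambda>x. conjunction T0 T1 x * bn_phiS par cp S x) =
            a1 * EV par cp V (\<lambda>x. conjunction T0 T1' x * bn_phiS par cp S x)
            + b1 * EV par cp V (\<lambda>x. (conjunction T0 T1' x * ind (x p)) * bn_phiS par cp S x)"
        proof
          fix S assume "S \<in> Pow V" then have S: "S \<subseteq> V" by blast
          have "EV par cp (insert w V) (\<lambda>x. conjunction T0 T1 x * bn_phiS par cp S x)
              = EV par cp V (\<lambda>x. conjunction T0 T1' x * bn_phiS par cp S x * bn_mu par cp w x)"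
            unfolding cs1[OF S] by (rule EV_cong) (simp add: fx ind_def algebra_simps)
          also have "\<dots> = a1 * EV par cp V (\<lambda>x. conjunction T0 T1' x * bn_phiS par cp S x)
            + b1 * EV par cp V (\<lambda>x. (conjunction T0 T1' x * ind (x p)) * bn_phiS par cp S x)"
            by (rule EV_linear) (use hmu in blast)
          finally show "EV par cp (insert w V) (\<lambda>x. conjunction T0 T1 x * bn_phiS par cp S x) =
            a1 * EV par cp V (\<lambda>x. conjunction T0 T1' x * bn_phiS par cp S x)
            + b1 * EV par cp V (\<lambda>x. (conjunction T0 T1' x * ind (x p)) * bn_phiS par cp S x)" .
        qed
        have c2: "\<forall>S\<in>Pow V. EV par cp (insert w V) (\<lambda>x. conjunction T0 T1 x * bn_phiS par cp (insert w S) x) =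
            a2 * EV par cp V (\<lambda>x. conjunction T0 T1' x * bn_phiS par cp S x)
            + b2 * EV par cp V (\<lambda>x. (conjunction T0 T1' x * ind (x p)) * bn_phiS par cp S x)"
        proof
          fix S assume "S \<in> Pow V" then have S: "S \<subseteq> V" by blast
          have "EV par cp (insert w V) (\<lambda>x. conjunction T0 T1 x * bn_phiS par cp (insert w S) x)
              = EV par cp V (\<lambda>x. conjunction T0 T1' x * bn_phiS par cp S x * bn_sigma par cp w x)"
            unfolding cs2[OF S] fx ms ms2 by (rule EV_cong) (simp add: ind_def algebra_simps)
          also have "\<dots> = a2 * EV par cp V (\<lambda>x. conjunction T0 T1' x * bn_phiS par cp S x)
            + b2 * EV par cp V (\<lambda>x. (conjunction T0 T1' x * ind (x p)) * bn_phiS par cp S x)"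
            by (rule EV_linear) (use hsig in blast)
          finally show "EV par cp (insert w V) (\<lambda>x. conjunction T0 T1 x * bn_phiS par cp (insert w S) x) =
            a2 * EV par cp V (\<lambda>x. conjunction T0 T1' x * bn_phiS par cp S x)
            + b2 * EV par cp V (\<lambda>x. (conjunction T0 T1' x * ind (x p)) * bn_phiS par cp S x)" .
        qed
        have ab: "\<bar>a1\<bar> + \<bar>a2\<bar> \<le> 2" "\<bar>b1\<bar> + \<bar>b2\<bar> \<le> 2 * \<alpha>" using hb by auto
        show ?thesis unfolding K_def[symmetric]
          by (rule step_combine[OF finV wV c1 c2 ab pV IH T' d Kid K1 a0])
      next
        case zero
        have w1: "w \<notin> T1" using zero dj by blast
        define T0' where "T0' = T0 - {w}"
        have T': "T0' \<subseteq> V" "T1 \<subseteq> V" "T0' \<inter> T1 = {}" using T0 T1 w1 dj unfolding T0'_def by auto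
        have wT': "w \<notin> T0'" by (simp add: T0'_def)
        have fx: "\<And>x b. conjunction T0 T1 (x(w:=b)) = (1 - ind b) * conjunction T0' T1 x"
          using conj_ind_T0[OF zero finT(1)] conj_upd[OF wT' w1] unfolding T0'_def by simp
        have d: "card (T0' \<union> T1) + 1 = card (T0 \<union> T1)"
        proof -
          have "T0' \<union> T1 = (T0 \<union> T1) - {w}" unfolding T0'_def using w1 by blast
          moreover have "w \<in> T0 \<union> T1" using zero by blast
          moreover have "card (T0 \<union> T1) > 0" using \<open>w \<in> T0 \<union> T1\<close> finT by (auto simp: card_gt_0_iff)
          ultimately show ?thesis using finT by (simp add: card_Diff_singleton)
        qed
        have hmu': "\<forall>x. 1 - bn_mu par cp w x = (1 - a1) + (- b1) * ind (x p)" using hmu by simp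
        have hsig': "\<forall>x. - bn_sigma par cp w x = (- a2) + (- b2) * ind (x p)" using hsig by simp
        have c1: "\<forall>S\<in>Pow V. EV par cp (insert w V) (\<lambda>x. conjunction T0 T1 x * bn_phiS par cp S x) =
            (1 - a1) * EV par cp V (\<lambda>x. conjunction T0' T1 x * bn_phiS par cp S x)
            + (- b1) * EV par cp V (\<lambda>x. (conjunction T0' T1 x * ind (x p)) * bn_phiS par cp S x)"
        proof
          fix S assume "S \<in> Pow V" then have S: "S \<subseteq> V" by blast
          have "EV par cp (insert w V) (\<lambda>x. conjunction T0 T1 x * bn_phiS par cp S x)
              = EV par cp V (\<lambda>x. conjunction T0' T1 x * bn_phiS par cp S x * (1 - bn_mu par cp w x))"
            unfolding cs1[OF S] by (rule EV_cong) (simp add: fx ind_def algebra_simps)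
          also have "\<dots> = (1 - a1) * EV par cp V (\<lambda>x. conjunction T0' T1 x * bn_phiS par cp S x)
            + (- b1) * EV par cp V (\<lambda>x. (conjunction T0' T1 x * ind (x p)) * bn_phiS par cp S x)"
            by (rule EV_linear) (use hmu' in blast)
          finally show "EV par cp (insert w V) (\<lambda>x. conjunction T0 T1 x * bn_phiS par cp S x) =
            (1 - a1) * EV par cp V (\<lambda>x. conjunction T0' T1 x * bn_phiS par cp S x)
            + (- b1) * EV par cp V (\<lambda>x. (conjunction T0' T1 x * ind (x p)) * bn_phiS par cp S x)" .
        qed
        have c2: "\<forall>S\<in>Pow V. EV par cp (insert w V) (\<lambda>x. conjunction T0 T1 x * bn_phiS par cp (insert w S) x) =
            (- a2) * EV par cp V (\<lambda>x. conjunction T0' T1 x * bn_phiS par cp S x)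
            + (- b2) * EV par cp V (\<lambda>x. (conjunction T0' T1 x * ind (x p)) * bn_phiS par cp S x)"
        proof
          fix S assume "S \<in> Pow V" then have S: "S \<subseteq> V" by blast
          have "EV par cp (insert w V) (\<lambda>x. conjunction T0 T1 x * bn_phiS par cp (insert w S) x)
              = EV par cp V (\<lambda>x. conjunction T0' T1 x * bn_phiS par cp S x * (- bn_sigma par cp w x))"
            unfolding cs2[OF S] fx ms ms2 by (rule EV_cong) (simp add: ind_def algebra_simps)
          also have "\<dots> = (- a2) * EV par cp V (\<lambda>x. conjunction T0' T1 x * bn_phiS par cp S x)
            + (- b2) * EV par cp V (\<lambda>x. (conjunction T0' T1 x * ind (x p)) * bn_phiS par cp S x)"
            by (rule EV_linear) (use hsig' in blast)
          finally show "EV par cp (insert w V) (\<lambda>x. conjunction T0 T1 x * bn_phiS par cp (insert w S) x) =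
            (- a2) * EV par cp V (\<lambda>x. conjunction T0' T1 x * bn_phiS par cp S x)
            + (- b2) * EV par cp V (\<lambda>x. (conjunction T0' T1 x * ind (x p)) * bn_phiS par cp S x)" .
        qed
        have ab: "\<bar>1 - a1\<bar> + \<bar>- a2\<bar> \<le> 2" "\<bar>- b1\<bar> + \<bar>- b2\<bar> \<le> 2 * \<alpha>" using hb by auto
        have pV': "- b1 = 0 \<and> - b2 = 0 \<or> p \<in> V" using pV by simp
        show ?thesis unfolding K_def[symmetric]
          by (rule step_combine[OF finV wV c1 c2 ab pV' IH T' d Kid K1 a0])
      qed
    qed
  qed
qed


lemma K_le:
  fixes \<alpha> :: real assumes "0 \<le> \<alpha>" "\<alpha> < 1/2"
  shows "2/(1-2*\<alpha>) \<le> ((2 - 2*\<alpha>) / (1 - 2*\<alpha>)) ^ 2"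
proof -
  define t where "t = 1 - 2*\<alpha>"
  have t: "t > 0" using assms unfolding t_def by simp
  have e: "2 - 2*\<alpha> = 1 + t" unfolding t_def by simp
  have "2 * t \<le> (1 + t)^2" by (simp add: power2_eq_square algebra_simps add_nonneg_nonneg)
  then have "2 / t \<le> (1 + t)^2 / t^2" using t by (simp add: field_simps power2_eq_square)
  then show ?thesis unfolding e t_def[symmetric] by (simp add: power_divide)
qed

theorem mainTheorem8:
  fixes n d :: nat and \<alpha> :: real
    and par :: "nat \<Rightarrow> nat option" and cp :: "nat \<Rightarrow> bool \<Rightarrow> real"
    and T0 T1 :: "nat set"
  assumes "0 \<le> \<alpha>" and "\<alpha> < 1/2"
    and "forest_bn n par"
    and "\<forall>v<n. \<forall>x\<in>cube n. 0 < bn_mu par cp v x \<and> bn_mu par cp v x < 1"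
    and "diff_bounded n par cp \<alpha>"
    and "T0 \<subseteq> {..<n}" and "T1 \<subseteq> {..<n}" and "T0 \<inter> T1 = {}"
    and "card (T0 \<union> T1) = d"
  shows "bn_L1 n par cp (conjunction T0 T1) \<le> ((2 - 2*\<alpha>) / (1 - 2*\<alpha>)) ^ (2*d)"
proof -
  obtain rank :: "nat \<Rightarrow> nat" where rk: "\<forall>v<n. \<forall>u. par v = Some u \<longrightarrow> rank u < rank v"
    using assms(3) unfolding forest_bn_def by blast
  have pin: "\<forall>v<n. \<forall>u. par v = Some u \<longrightarrow> u < n" using assms(3) unfolding forest_bn_def by blast
  have cl: "\<forall>v\<in>{..<n}. \<forall>u. par v = Some u \<longrightarrow> u \<in> {..<n} \<and> rank u < rank v"
    using rk pin by auto
  have gd: "\<forall>v\<in>{..<n}. goodnode par cp \<alpha> v"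
  proof
    fix v assume "v \<in> {..<n}" then have v: "v < n" by simp
    show "goodnode par cp \<alpha> v"
    proof (cases "par v")
      case None
      have "(\<lambda>_. False) \<in> cube n" by (simp add: cube_def)
      then have "0 < bn_mu par cp v (\<lambda>_. False) \<and> bn_mu par cp v (\<lambda>_. False) < 1" using assms(4) v by blast
      then show ?thesis using None unfolding goodnode_def bn_mu_def by simp
    next
      case (Some u)
      have u: "u < n" using pin v Some by blast
      define xb where "xb = (\<lambda>b::bool. \<lambda>i. b \<and> i = u)"
      have xc: "xb b \<in> cube n" for b using u unfolding xb_def cube_def by auto
      have mu: "bn_mu par cp v (xb b) = cp v b" for b using Some unfolding bn_mu_def xb_def by simp
      have sg: "bn_sigma par cp v (xb b) = sig (cp v b)" for b unfolding bn_sigma_def mu sig_def ..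
      have b: "0 < cp v b \<and> cp v b < 1" for b using assms(4) v xc[of b] mu[of b] by metis
      have db: "\<bar>bn_mu par cp v (xb True) - bn_mu par cp v (xb False)\<bar> \<le> \<alpha> \<and>
          \<bar>bn_sigma par cp v (xb True) - bn_sigma par cp v (xb False)\<bar> \<le> \<alpha>"
        using assms(5) v xc unfolding diff_bounded_def by blast
      show ?thesis using Some b db unfolding goodnode_def mu sg by simp
    qed
  qed
  have m: "L1V par cp {..<n} (conjunction T0 T1) \<le> (2/(1-2*\<alpha>)) ^ card (T0 \<union> T1)"
    using main[OF assms(1) assms(2) finite_lessThan, where par=par and cp=cp and rank=rank] cl gd assms(6,7,8) by blast
  have "(2/(1-2*\<alpha>)) ^ d \<le> (((2 - 2*\<alpha>) / (1 - 2*\<alpha>)) ^ 2) ^ d"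
    by (rule power_mono[OF K_le[OF assms(1,2)]]) (use assms(2) in simp)
  also have "\<dots> = ((2 - 2*\<alpha>) / (1 - 2*\<alpha>)) ^ (2*d)" by (simp add: power_mult)
  finally show ?thesis using m assms(9) bn_L1_eq by simp
qed

end
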